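(* Let $q$ be a prime power and $n,t,m$ positive integers with $t\geq m$. Let $\ell$ be a positive integer such that $$ e \left[ {\ell \choose t} - { \ell-t \choose t} \right] \left(\frac{m}{q}\right)^{n} \leq 1,$$ where $e$ is Euler's number and ${\ell-t \choose t}$ is set to zero if $\ell < 2t$. Then $EGZ(t,\mathbb{F}_q^{n},m) > \ell$.
   Context: $\mathbb{F}_q^n$ is viewed as a commutative ring with coordinatewise operations. For elements $g_1,\dots,g_t$ of a commutative ring $R$, $e_m(g_1,\dots,g_t)=\sum_{1\leq i_1<\cdots<i_m\leq t}\prod_{j=1}^m g_{i_j}$. A sequence over $R$ is a finite list of elements of $R$ (repetitions allowed); a subsequence of length $t$ is obtained by choosing $t$ distinct positions. For a finite commutative ring $R$, $EGZ(t,R,m)$ is the smallest positive integer $\ell$ such that every sequence $S$ over $R$ of length $|S|\geq \ell$ contains a subsequence $S'$ of length $t$ with $e_m(S')=0$ in $R$; if no such $\ell$ exists, $EGZ(t,R,m)=\infty$. *)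

theory Defs
  imports "HOL-Analysis.Analysis" "HOL-Library.Extended_Nat"
begin

definition esym :: "nat \<Rightarrow> 'r::comm_ring_1 list \<Rightarrow> nat set \<Rightarrow> 'r" where
  "esym m S I = (\<Sum>J\<in>{J. J \<subseteq> I \<and> card J = m}. \<Prod>j\<in>J. S ! j)"

definition egz_prop :: "nat \<Rightarrow> 'r::comm_ring_1 itself \<Rightarrow> nat \<Rightarrow> nat \<Rightarrow> bool" where
  "egz_prop t R m l \<longleftrightarrow>
     (\<forall>S::'r list. length S \<ge> l \<longrightarrow>
        (\<exists>I. I \<subseteq> {..<length S} \<and> card I = t \<and> esym m S I = 0))"

definition EGZ :: "nat \<Rightarrow> 'r::comm_ring_1 itself \<Rightarrow> nat \<Rightarrow> enat" where
  "EGZ t R m = (if \<exists>l>0. egz_prop t R m l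
                then enat (LEAST l. l > 0 \<and> egz_prop t R m l) else \<infinity>)"

end

theory Submission
  imports Defs
begin

definition dep :: "('y \<Rightarrow> 'a) set \<Rightarrow> ('y \<Rightarrow> 'a) set \<Rightarrow> 'y set \<Rightarrow> bool" where
  "dep \<Omega> E Z \<longleftrightarrow> (\<forall>f\<in>\<Omega>. \<forall>g\<in>\<Omega>. (\<forall>z\<in>Z. f z = g z) \<longrightarrow> (f \<in> E \<longleftrightarrow> g \<in> E))"

lemma card_inter_split:
  fixes Y :: "'y set"
  assumes \<Omega>_def: "\<Omega> = PiE Y (\<lambda>_. UNIV :: 'a set)"
  assumes Y1: "Y1 \<subseteq> Y" and E: "E \<subseteq> \<Omega>" and F: "F \<subseteq> \<Omega>"
    and dE: "dep \<Omega> E Y1" and dF: "dep \<Omega> F (Y - Y1)"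
  shows "card (E \<inter> F) = card ((\<lambda>f. restrict f Y1) ` E) * card ((\<lambda>f. restrict f (Y - Y1)) ` F)"
proof -
  define \<phi> where "\<phi> = (\<lambda>f::'y\<Rightarrow>'a. (restrict f Y1, restrict f (Y - Y1)))"
  have inj: "inj_on \<phi> \<Omega>"
  proof (rule inj_onI)
    fix f g assume f: "f \<in> \<Omega>" and g: "g \<in> \<Omega>" and eq: "\<phi> f = \<phi> g"
    show "f = g"
    proof
      fix y
      show "f y = g y"
      proof (cases "y \<in> Y")
        case True
        then show ?thesis using eq unfolding \<phi>_def restrict_def
          by (cases "y \<in> Y1") (auto dest!: fun_cong[where x=y])
      next
        case False
        then show ?thesis using f g unfolding \<Omega>_def by (auto simp: PiE_def extensional_def)
      qed
    qed
  qed
  have img: "\<phi> ` (E \<inter> F) = ((\<lambda>f. restrict f Y1) ` E) \<times> ((\<lambda>f. restrict f (Y - Y1)) ` F)"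
  proof
    show "\<phi> ` (E \<inter> F) \<subseteq> ((\<lambda>f. restrict f Y1) ` E) \<times> ((\<lambda>f. restrict f (Y - Y1)) ` F)"
      unfolding \<phi>_def by auto
  next
    show "((\<lambda>f. restrict f Y1) ` E) \<times> ((\<lambda>f. restrict f (Y - Y1)) ` F) \<subseteq> \<phi> ` (E \<inter> F)"
    proof clarify
      fix e f assume e: "e \<in> E" and f: "f \<in> F"
      define w where "w = (\<lambda>y. if y \<in> Y1 then e y else f y)"
      have eO: "e \<in> \<Omega>" and fO: "f \<in> \<Omega>" using e f E F by auto
      have wO: "w \<in> \<Omega>" using fO Y1 unfolding w_def \<Omega>_def by (auto simp: PiE_def extensional_def)
      have "\<And>z. z\<in>Y1 \<Longrightarrow> w z = e z" by (simp add: w_def)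
      from dE[unfolded dep_def, rule_format, OF wO eO this] e have "w \<in> E" by simp
      moreover have "\<And>z. z\<in>Y - Y1 \<Longrightarrow> w z = f z" by (simp add: w_def)
      from dF[unfolded dep_def, rule_format, OF wO fO this] f have "w \<in> F" by simp
      moreover have "\<phi> w = (restrict e Y1, restrict f (Y - Y1))"
        unfolding \<phi>_def w_def by (auto simp: restrict_def fun_eq_iff)
      ultimately show "(restrict e Y1, restrict f (Y - Y1)) \<in> \<phi> ` (E \<inter> F)"
        by (metis IntI image_eqI)
    qed
  qed
  have "card (E \<inter> F) = card (\<phi> ` (E \<inter> F))"
    using inj E by (intro card_image[symmetric]) (auto intro: inj_on_subset)
  also have "\<dots> = card ((\<lambda>f. restrict f Y1) ` E) * card ((\<lambda>f. restrict f (Y - Y1)) ` F)"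
    unfolding img card_cartesian_product ..
  finally show ?thesis .
qed

lemma dep_UNIV: "dep \<Omega> \<Omega> Z" unfolding dep_def by auto

lemma card_indep:
  fixes Y :: "'y set"
  assumes \<Omega>_def: "\<Omega> = PiE Y (\<lambda>_. UNIV :: 'a set)"
  assumes Y1: "Y1 \<subseteq> Y" and E: "E \<subseteq> \<Omega>" and F: "F \<subseteq> \<Omega>"
    and dE: "dep \<Omega> E Y1" and dF: "dep \<Omega> F (Y - Y1)"
  shows "card (E \<inter> F) * card \<Omega> = card E * card F"
proof -
  have 1: "card (E \<inter> F) = card ((\<lambda>f. restrict f Y1) ` E) * card ((\<lambda>f. restrict f (Y - Y1)) ` F)"
    using card_inter_split[OF \<Omega>_def Y1 E F dE dF] .
  have 2: "card (E \<inter> \<Omega>) = card ((\<lambda>f. restrict f Y1) ` E) * card ((\<lambda>f. restrict f (Y - Y1)) ` \<Omega>)"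
    using card_inter_split[OF \<Omega>_def Y1 E _ dE dep_UNIV] by simp
  have 3: "card (\<Omega> \<inter> F) = card ((\<lambda>f. restrict f Y1) ` \<Omega>) * card ((\<lambda>f. restrict f (Y - Y1)) ` F)"
    using card_inter_split[OF \<Omega>_def Y1 _ F dep_UNIV dF] by simp
  have 4: "card (\<Omega> \<inter> \<Omega>) = card ((\<lambda>f. restrict f Y1) ` \<Omega>) * card ((\<lambda>f. restrict f (Y - Y1)) ` \<Omega>)"
    using card_inter_split[OF \<Omega>_def Y1 _ _ dep_UNIV dep_UNIV] by simp
  have "E \<inter> \<Omega> = E" "\<Omega> \<inter> F = F" "\<Omega> \<inter> \<Omega> = \<Omega>" using E F by auto
  then show ?thesis using 1 2 3 4 by (simp add: ac_simps)
qed


lemma PiE_upd: "w \<in> PiE Y (\<lambda>_. UNIV) \<Longrightarrow> y \<in> Y \<Longrightarrow> w(y := c) \<in> PiE Y (\<lambda>_. UNIV)"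
  by (auto simp: PiE_def extensional_def)

lemma card_shift:
  fixes Y :: "'y set" and g :: "('y \<Rightarrow> 'a::field) \<Rightarrow> 'a"
  assumes \<Omega>_def: "\<Omega> = PiE Y (\<lambda>_. UNIV :: 'a set)" and y: "y \<in> Y"
    and gdep: "\<And>w c. w \<in> \<Omega> \<Longrightarrow> g (w(y := c)) = g w"
  shows "card {w\<in>\<Omega>. w y = g w} * CARD('a) = card \<Omega>"
proof -
  define S0 where "S0 = {w\<in>\<Omega>. w y = g w}"
  define h where "h = (\<lambda>(w::'y \<Rightarrow> 'a, c::'a). w(y := w y + c))"
  define h' where "h' = (\<lambda>w::'y \<Rightarrow> 'a. (w(y := g w), w y - g w))"
  have "bij_betw h (S0 \<times> UNIV) \<Omega>"
  proof (rule bij_betw_byWitness[where f'=h'])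
    show "\<forall>a\<in>S0 \<times> UNIV. h' (h a) = a"
    proof
      fix a assume "a \<in> S0 \<times> (UNIV :: 'a set)"
      then obtain w c where a: "a = (w, c)" and w: "w \<in> \<Omega>" "w y = g w"
        unfolding S0_def by auto
      have "g (w(y := w y + c)) = g w" using gdep w by simp
      then show "h' (h a) = a" using w unfolding a h_def h'_def by (auto simp: fun_eq_iff)
    qed
    show "\<forall>b\<in>\<Omega>. h (h' b) = b"
    proof
      fix b assume "b \<in> \<Omega>"
      then show "h (h' b) = b" unfolding h_def h'_def by (auto simp: fun_eq_iff)
    qed
    show "h ` (S0 \<times> UNIV) \<subseteq> \<Omega>"
      unfolding h_def S0_def \<Omega>_def using y by (auto intro: PiE_upd)
    show "h' ` \<Omega> \<subseteq> S0 \<times> UNIV"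
    proof (rule image_subsetI)
      fix w assume w: "w \<in> \<Omega>"
      have "g (w(y := g w)) = g w" using gdep w by simp
      moreover have "w(y := g w) \<in> \<Omega>" using w y unfolding \<Omega>_def by (auto intro: PiE_upd)
      ultimately show "h' w \<in> S0 \<times> UNIV" unfolding h'_def S0_def by auto
    qed
  qed
  then have "card (S0 \<times> (UNIV :: 'a set)) = card \<Omega>" by (rule bij_betw_same_card)
  then show ?thesis unfolding S0_def card_cartesian_product by simp
qed

definition es :: "nat \<Rightarrow> (nat \<times> 'k \<Rightarrow> 'a::comm_ring_1) \<Rightarrow> nat set \<Rightarrow> 'k \<Rightarrow> 'a" where
  "es m w I k = (\<Sum>J\<in>{J. J \<subseteq> I \<and> card J = m}. \<Prod>j\<in>J. w (j, k))"

lemma esum_insert: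
  fixes v :: "nat \<Rightarrow> 'a::comm_ring_1"
  assumes fin: "finite I" and j: "j \<notin> I"
  shows "(\<Sum>J\<in>{J. J \<subseteq> insert j I \<and> card J = Suc m}. prod v J) =
     v j * (\<Sum>J\<in>{J. J \<subseteq> I \<and> card J = m}. prod v J) + (\<Sum>J\<in>{J. J \<subseteq> I \<and> card J = Suc m}. prod v J)"
proof -
  have seteq: "{J. J \<subseteq> insert j I \<and> card J = Suc m} =
      insert j ` {J. J \<subseteq> I \<and> card J = m} \<union> {J. J \<subseteq> I \<and> card J = Suc m}"
  proof (intro equalityI subsetI)
    fix J assume "J \<in> {J. J \<subseteq> insert j I \<and> card J = Suc m}"
    then have J: "J \<subseteq> insert j I" "card J = Suc m" by auto
    have fJ: "finite J" using J fin finite_subset by blast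
    show "J \<in> insert j ` {J. J \<subseteq> I \<and> card J = m} \<union> {J. J \<subseteq> I \<and> card J = Suc m}"
    proof (cases "j \<in> J")
      case True
      then have "J = insert j (J - {j})" by auto
      moreover have "J - {j} \<subseteq> I" "card (J - {j}) = m" using J True fJ by auto
      ultimately show ?thesis by blast
    next
      case False
      then show ?thesis using J by auto
    qed
  next
    fix J assume "J \<in> insert j ` {J. J \<subseteq> I \<and> card J = m} \<union> {J. J \<subseteq> I \<and> card J = Suc m}"
    then show "J \<in> {J. J \<subseteq> insert j I \<and> card J = Suc m}"
    proof
      assume "J \<in> insert j ` {J. J \<subseteq> I \<and> card J = m}"
      then obtain K where K: "J = insert j K" "K \<subseteq> I" "card K = m" by auto
      have "finite K" using K fin finite_subset by blast
      moreover have "j \<notin> K" using K j by auto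
      ultimately show ?thesis using K by auto
    qed auto
  qed
  have finS: "finite {J. J \<subseteq> I \<and> card J = n}" for n using fin by auto
  have inj: "inj_on (insert j) {J. J \<subseteq> I \<and> card J = m}"
  proof (rule inj_onI)
    fix A B assume "A \<in> {J. J \<subseteq> I \<and> card J = m}" "B \<in> {J. J \<subseteq> I \<and> card J = m}" "insert j A = insert j B"
    then have "j \<notin> A" "j \<notin> B" "insert j A = insert j B" using j by auto
    then show "A = B" by (metis Diff_insert_absorb)
  qed
  have disj: "insert j ` {J. J \<subseteq> I \<and> card J = m} \<inter> {J. J \<subseteq> I \<and> card J = Suc m} = {}"
    using j by auto
  have "(\<Sum>J\<in>{J. J \<subseteq> insert j I \<and> card J = Suc m}. prod v J) =
     (\<Sum>J\<in>insert j ` {J. J \<subseteq> I \<and> card J = m}. prod v J) + (\<Sum>J\<in>{J. J \<subseteq> I \<and> card J = Suc m}. prod v J)"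
    unfolding seteq using finS disj by (intro sum.union_disjoint) auto
  also have "(\<Sum>J\<in>insert j ` {J. J \<subseteq> I \<and> card J = m}. prod v J) =
      (\<Sum>J\<in>{J. J \<subseteq> I \<and> card J = m}. prod v (insert j J))"
    using inj by (simp add: sum.reindex)
  also have "\<dots> = (\<Sum>J\<in>{J. J \<subseteq> I \<and> card J = m}. v j * prod v J)"
  proof (rule sum.cong)
    fix J assume "J \<in> {J. J \<subseteq> I \<and> card J = m}"
    then have "finite J" "j \<notin> J" using fin j finite_subset by auto
    then show "prod v (insert j J) = v j * prod v J" by simp
  qed simp
  finally show ?thesis by (simp add: sum_distrib_left)
qed

lemma es_insert: "finite I \<Longrightarrow> j \<notin> I \<Longrightarrow>
  es (Suc m) w (insert j I) k = w (j, k) * es m w I k + es (Suc m) w I k"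
  unfolding es_def by (rule esum_insert)

lemma es_0: "finite I \<Longrightarrow> es 0 w I k = 1"
proof -
  assume "finite I"
  then have "{J. J \<subseteq> I \<and> card J = 0} = {{}}" by (auto dest: finite_subset)
  then show ?thesis unfolding es_def by simp
qed

lemma es_cong: "(\<And>j. j \<in> I \<Longrightarrow> w (j, k) = w' (j, k)) \<Longrightarrow> es m w I k = es m w' I k"
  unfolding es_def by (intro sum.cong refl prod.cong) auto


lemma SZ:
  fixes Y :: "(nat \<times> 'k) set"
  assumes \<Omega>_def: "\<Omega> = PiE Y (\<lambda>_. UNIV :: 'a::{field,finite} set)" and finY: "finite Y"
    and fin: "finite I" and IY: "I \<times> {k} \<subseteq> Y" and mI: "m \<le> card I"
  shows "card {w\<in>\<Omega>. es m w I k = 0} * CARD('a) \<le> m * card \<Omega>"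
  using fin IY mI
proof (induction I arbitrary: m rule: finite_induct)
  case empty
  then show ?case by (simp add: es_0)
next
  case (insert j I)
  show ?case
  proof (cases m)
    case 0
    then show ?thesis using insert by (simp add: es_0)
  next
    case (Suc m')
    have m': "m' \<le> card I" using insert Suc by simp
    have IY': "I \<times> {k} \<subseteq> Y" and jY: "(j, k) \<in> Y" using insert by auto
    have finO: "finite \<Omega>" unfolding \<Omega>_def using finY by (simp add: finite_PiE)
    define g where "g = (\<lambda>w::nat \<times> 'k \<Rightarrow> 'a. - es (Suc m') w I k / es m' w I k)"
    have gdep: "g (w((j,k) := c)) = g w" for w c
    proof -
      have "es n (w((j,k) := c)) I k = es n w I k" for n
        using insert(2) by (intro es_cong) auto
      then show ?thesis unfolding g_def by simp
    qed
    have sub: "{w\<in>\<Omega>. es m w (insert j I) k = 0} \<subseteq> {w\<in>\<Omega>. es m' w I k = 0} \<union> {w\<in>\<Omega>. w (j,k) = g w}"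
    proof
      fix w assume "w \<in> {w\<in>\<Omega>. es m w (insert j I) k = 0}"
      then have w: "w \<in> \<Omega>" "w (j,k) * es m' w I k + es (Suc m') w I k = 0"
        using es_insert[OF insert(1,2), of m' w k] Suc by auto
      show "w \<in> {w\<in>\<Omega>. es m' w I k = 0} \<union> {w\<in>\<Omega>. w (j,k) = g w}"
      proof (cases "es m' w I k = 0")
        case False
        have "w (j,k) * es m' w I k = - es (Suc m') w I k" using w(2) by (simp add: eq_neg_iff_add_eq_0)
        have "w (j,k) = (w (j,k) * es m' w I k) / es m' w I k" using False by simp
        also have "\<dots> = (- es (Suc m') w I k) / es m' w I k" using \<open>w (j,k) * es m' w I k = - es (Suc m') w I k\<close> by simp
        finally have "w (j,k) = g w" unfolding g_def by simp
        then show ?thesis using w by auto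
      qed (use w in auto)
    qed
    have "card {w\<in>\<Omega>. es m w (insert j I) k = 0} \<le> card ({w\<in>\<Omega>. es m' w I k = 0} \<union> {w\<in>\<Omega>. w (j,k) = g w})"
      using sub finO by (intro card_mono) auto
    also have "\<dots> \<le> card {w\<in>\<Omega>. es m' w I k = 0} + card {w\<in>\<Omega>. w (j,k) = g w}"
      by (rule card_Un_le)
    finally have c0: "card {w\<in>\<Omega>. es m w (insert j I) k = 0} \<le>
        card {w\<in>\<Omega>. es m' w I k = 0} + card {w\<in>\<Omega>. w (j,k) = g w}" .
    have "card {w\<in>\<Omega>. es m w (insert j I) k = 0} * CARD('a) \<le>
        (card {w\<in>\<Omega>. es m' w I k = 0} + card {w\<in>\<Omega>. w (j,k) = g w}) * CARD('a)"
      using c0 by (rule mult_le_mono1)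
    also have "\<dots> = card {w\<in>\<Omega>. es m' w I k = 0} * CARD('a) + card {w\<in>\<Omega>. w (j,k) = g w} * CARD('a)"
      by (rule add_mult_distrib)
    also have "card {w\<in>\<Omega>. w (j,k) = g w} * CARD('a) = card \<Omega>"
      by (rule card_shift[OF \<Omega>_def jY]) (rule gdep)
    also have "card {w\<in>\<Omega>. es m' w I k = 0} * CARD('a) \<le> m' * card \<Omega>"
      using insert.IH[OF IY' m'] .
    finally show ?thesis using Suc by simp
  qed
qed

lemma coord:
  fixes Y :: "(nat \<times> 'k::finite) set"
  assumes \<Omega>_def: "\<Omega> = PiE Y (\<lambda>_. UNIV :: 'a::{field,finite} set)" and finY: "finite Y"
    and fin: "finite I" and IY: "I \<times> UNIV \<subseteq> Y" and mI: "m \<le> card I"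
    and finK: "finite K"
  shows "real (card {w\<in>\<Omega>. \<forall>k\<in>K. es m w I k = 0}) \<le> (real m / CARD('a)) ^ card K * real (card \<Omega>)"
  using finK
proof (induction K rule: finite_induct)
  case empty
  then show ?case by simp
next
  case (insert k K)
  have finO: "finite \<Omega>" unfolding \<Omega>_def using finY by (simp add: finite_PiE)
  have posO: "card \<Omega> > 0" unfolding \<Omega>_def using finY by (simp add: card_PiE)
  define C where "C = {w\<in>\<Omega>. es m w I k = 0}"
  define F where "F = {w\<in>\<Omega>. \<forall>k\<in>K. es m w I k = 0}"
  have eq: "{w\<in>\<Omega>. \<forall>k\<in>insert k K. es m w I k = 0} = C \<inter> F" unfolding C_def F_def by auto
  have Y1: "I \<times> {k} \<subseteq> Y" using IY by auto
  have dC: "dep \<Omega> C (I \<times> {k})"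
    unfolding dep_def C_def
  proof (intro ballI impI)
    fix f g assume "f \<in> \<Omega>" "g \<in> \<Omega>" "\<forall>z\<in>I \<times> {k}. f z = g z"
    then have "es m f I k = es m g I k" by (intro es_cong) auto
    then show "(f \<in> {w \<in> \<Omega>. es m w I k = 0}) = (g \<in> {w \<in> \<Omega>. es m w I k = 0})"
      using \<open>f \<in> \<Omega>\<close> \<open>g \<in> \<Omega>\<close> by simp
  qed
  have dF: "dep \<Omega> F (Y - I \<times> {k})"
    unfolding dep_def F_def
  proof (intro ballI impI)
    fix f g assume fg: "f \<in> \<Omega>" "g \<in> \<Omega>" "\<forall>z\<in>Y - I \<times> {k}. f z = g z"
    have "es m f I k' = es m g I k'" if "k' \<in> K" for k'
    proof (rule es_cong)
      fix j assume "j \<in> I"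
      then have "(j, k') \<in> Y - I \<times> {k}" using IY that insert(2) by auto
      then show "f (j, k') = g (j, k')" using fg by auto
    qed
    then show "(f \<in> {w \<in> \<Omega>. \<forall>k\<in>K. es m w I k = 0}) = (g \<in> {w \<in> \<Omega>. \<forall>k\<in>K. es m w I k = 0})"
      using fg by auto
  qed
  have key: "card (C \<inter> F) * card \<Omega> = card C * card F"
    by (rule card_indep[OF \<Omega>_def Y1 _ _ dC dF]) (auto simp: C_def F_def)
  have "card C * CARD('a) \<le> m * card \<Omega>"
    unfolding C_def by (rule SZ[OF \<Omega>_def finY fin _ mI]) (use Y1 in auto)
  then have "real (card C) * real CARD('a) \<le> real m * real (card \<Omega>)"
    using of_nat_mono[OF \<open>card C * CARD('a) \<le> m * card \<Omega>\<close>, where 'a=real] by (simp only: of_nat_mult)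
  then have "real (card C) \<le> real m * real (card \<Omega>) / real CARD('a)"
    by (simp add: pos_le_divide_eq)
  then have Cb: "real (card C) \<le> real m / CARD('a) * real (card \<Omega>)" by simp
  have Fb: "real (card F) \<le> (real m / CARD('a)) ^ card K * real (card \<Omega>)"
    using insert.IH unfolding F_def .
  have "real (card (C \<inter> F)) * real (card \<Omega>) = real (card C) * real (card F)"
    using arg_cong[OF key, of "of_nat :: nat \<Rightarrow> real"] by (simp only: of_nat_mult)
  also have "\<dots> \<le> (real m / CARD('a) * real (card \<Omega>)) * ((real m / CARD('a)) ^ card K * real (card \<Omega>))"
    using Cb Fb by (intro mult_mono) auto
  also have "\<dots> = ((real m / CARD('a)) * ((real m / CARD('a)) ^ card K * real (card \<Omega>))) * real (card \<Omega>)"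
    by (simp add: ac_simps)
  finally have c: "real (card (C \<inter> F)) * real (card \<Omega>) \<le> ((real m / CARD('a)) * ((real m / CARD('a)) ^ card K * real (card \<Omega>))) * real (card \<Omega>)" .
  have "real (card \<Omega>) > 0" using posO by simp
  from mult_right_le_imp_le[OF c this]
  have "real (card (C \<inter> F)) \<le> (real m / CARD('a)) * ((real m / CARD('a)) ^ card K * real (card \<Omega>))" .
  moreover have "card (insert k K) = Suc (card K)" using insert(1,2) by simp
  ultimately show ?case unfolding eq by (simp only: power_Suc mult.assoc)
qed


lemma growth:
  fixes A :: "'i \<Rightarrow> 'w set"
  assumes finO: "finite \<Omega>" and finW: "finite W" and x1: "x \<le> 1"
    and H: "\<And>U j. U \<subseteq> T \<Longrightarrow> j \<in> T \<Longrightarrow> j \<notin> U \<Longrightarrow>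
             real (card (A j \<inter> (\<Omega> - \<Union>(A ` U)))) \<le> x * real (card (\<Omega> - \<Union>(A ` U)))"
  shows "U \<union> W \<subseteq> T \<Longrightarrow> U \<inter> W = {} \<Longrightarrow>
     (1 - x) ^ card W * real (card (\<Omega> - \<Union>(A ` U))) \<le> real (card (\<Omega> - \<Union>(A ` (U \<union> W))))"
  using finW
proof (induction W rule: finite_induct)
  case empty
  then show ?case by simp
next
  case (insert j W)
  define V where "V = U \<union> W"
  have V: "V \<subseteq> T" "j \<in> T" "j \<notin> V" using insert.prems insert(2) unfolding V_def by auto
  have IH: "(1 - x) ^ card W * real (card (\<Omega> - \<Union>(A ` U))) \<le> real (card (\<Omega> - \<Union>(A ` V)))"
    using insert.IH insert.prems unfolding V_def by auto
  have eqB: "\<Omega> - \<Union>(A ` (U \<union> insert j W)) = (\<Omega> - \<Union>(A ` V)) - A j" unfolding V_def by auto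
  have split: "card (\<Omega> - \<Union>(A ` V)) = card ((\<Omega> - \<Union>(A ` V)) - A j) + card (A j \<inter> (\<Omega> - \<Union>(A ` V)))"
  proof -
    have "(\<Omega> - \<Union>(A ` V)) = ((\<Omega> - \<Union>(A ` V)) - A j) \<union> (A j \<inter> (\<Omega> - \<Union>(A ` V)))" by auto
    moreover have "finite (\<Omega> - \<Union>(A ` V))" using finO by auto
    moreover have "((\<Omega> - \<Union>(A ` V)) - A j) \<inter> (A j \<inter> (\<Omega> - \<Union>(A ` V))) = {}" by auto
    ultimately show ?thesis using card_Un_disjoint[of "(\<Omega> - \<Union>(A ` V)) - A j" "A j \<inter> (\<Omega> - \<Union>(A ` V))"]
      by (metis finite_Diff finite_Int)
  qed
  have hj: "real (card (A j \<inter> (\<Omega> - \<Union>(A ` V)))) \<le> x * real (card (\<Omega> - \<Union>(A ` V)))"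
    using H V by blast
  have "(1 - x) * real (card (\<Omega> - \<Union>(A ` V))) \<le> real (card ((\<Omega> - \<Union>(A ` V)) - A j))"
    using split hj by (simp add: algebra_simps)
  moreover have "(1 - x) ^ card (insert j W) * real (card (\<Omega> - \<Union>(A ` U))) =
       (1 - x) * ((1 - x) ^ card W * real (card (\<Omega> - \<Union>(A ` U))))"
    using insert(1,2) by simp
  moreover have "(1 - x) * ((1 - x) ^ card W * real (card (\<Omega> - \<Union>(A ` U)))) \<le> (1 - x) * real (card (\<Omega> - \<Union>(A ` V)))"
    using IH x1 by (intro mult_left_mono) auto
  ultimately show ?case unfolding eqB by linarith
qed

lemma LLL:
  fixes \<Omega> :: "'w set" and A :: "'i \<Rightarrow> 'w set" and Is :: "'i set" and N :: "'i \<Rightarrow> 'i set"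
  assumes finO: "finite \<Omega>" and finI: "finite Is" and ne: "\<Omega> \<noteq> {}"
    and x0: "0 \<le> x" and x1: "x < 1" and px: "p \<le> x * (1 - x) ^ (D - 1)"
    and Ni: "\<And>i. i \<in> Is \<Longrightarrow> i \<in> N i" and ND: "\<And>i. i \<in> Is \<Longrightarrow> card (N i \<inter> Is) \<le> D"
    and ind: "\<And>i T. i \<in> Is \<Longrightarrow> T \<subseteq> Is \<Longrightarrow> T \<inter> N i = {} \<Longrightarrow>
        real (card (A i \<inter> (\<Omega> - \<Union>(A ` T)))) \<le> p * real (card (\<Omega> - \<Union>(A ` T)))"
  shows "\<Omega> - \<Union>(A ` Is) \<noteq> {}"
proof -
  let ?B = "\<lambda>T. \<Omega> - \<Union>(A ` T)"
  have main: "T \<subseteq> Is \<longrightarrow> real (card (?B T)) > 0 \<and>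
      (\<forall>i\<in>Is - T. real (card (A i \<inter> ?B T)) \<le> x * real (card (?B T)))" for T
  proof -
    have "finite T \<Longrightarrow> ?thesis"
    proof (induction T rule: finite_psubset_induct)
      case (psubset T)
      show ?case
      proof
        assume TI: "T \<subseteq> Is"
        have H: "real (card (A j \<inter> ?B U)) \<le> x * real (card (?B U))"
          if "U \<subseteq> T" "j \<in> T" "j \<notin> U" for U j
        proof -
          have "U \<subset> T" using that by auto
          then show ?thesis using psubset.IH[of U] that TI by auto
        qed
        have gr: "U \<union> W \<subseteq> T \<Longrightarrow> U \<inter> W = {} \<Longrightarrow>
           (1 - x) ^ card W * real (card (?B U)) \<le> real (card (?B (U \<union> W)))" for U W
        proof -
          assume a: "U \<union> W \<subseteq> T" "U \<inter> W = {}"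
          have fW: "finite W" using a psubset.hyps finite_subset by blast
          show ?thesis by (rule growth[OF finO fW less_imp_le[OF x1] H a(1) a(2)])
        qed
        have pos: "real (card (?B T)) > 0"
        proof (cases "T = {}")
          case True
          then show ?thesis using finO ne by (simp add: card_gt_0_iff)
        next
          case False
          then obtain j where j: "j \<in> T" by auto
          have "T - {j} \<subset> T" using j by auto
          then have p0: "real (card (?B (T - {j}))) > 0" using psubset.IH[of "T - {j}"] TI by auto
          have eqT: "(T - {j}) \<union> {j} = T" using j by auto
          have g1: "(1 - x) ^ card {j} * real (card (?B (T - {j}))) \<le> real (card (?B ((T - {j}) \<union> {j})))"
            using j by (intro gr) auto
          then have g2: "(1 - x) * real (card (?B (T - {j}))) \<le> real (card (?B T))"
            by (simp only: eqT card_insert_disjoint card.empty power_one_right finite.emptyI empty_iff not_False_eq_True One_nat_def power_Suc power_0 mult_1_right)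
          have "(1 - x) * real (card (?B (T - {j}))) > 0" using p0 x1 by simp
          then show ?thesis using g2 by linarith
        qed
        have bound: "real (card (A i \<inter> ?B T)) \<le> x * real (card (?B T))" if i: "i \<in> Is - T" for i
        proof -
          define T1 where "T1 = T \<inter> N i"
          define T2 where "T2 = T - N i"
          have T12: "T2 \<union> T1 = T" "T2 \<inter> T1 = {}" unfolding T1_def T2_def by auto
          have "card T1 \<le> card (N i \<inter> Is - {i})"
            using i TI finI unfolding T1_def by (intro card_mono) auto
          also have "\<dots> = card (N i \<inter> Is) - 1" using i Ni by simp
          also have "\<dots> \<le> D - 1" using ND[of i] i by (simp add: diff_le_mono)
          finally have cT1: "card T1 \<le> D - 1" .
          have "card (A i \<inter> ?B T) \<le> card (A i \<inter> ?B T2)"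
            using finO T12 by (intro card_mono) auto
          then have "real (card (A i \<inter> ?B T)) \<le> real (card (A i \<inter> ?B T2))" by simp
          also have "\<dots> \<le> p * real (card (?B T2))"
            using ind[of i T2] i TI unfolding T2_def by auto
          also have "\<dots> \<le> x * (1 - x) ^ (D - 1) * real (card (?B T2))"
            using px by (intro mult_right_mono) auto
          also have "\<dots> \<le> x * ((1 - x) ^ card T1 * real (card (?B T2)))"
          proof -
            have "(1 - x) ^ (D - 1) \<le> (1 - x) ^ card T1"
              using cT1 x0 x1 by (intro power_decreasing) auto
            then show ?thesis using x0 by (simp add: mult_left_mono mult_right_mono mult.assoc)
          qed
          also have "\<dots> \<le> x * real (card (?B T))"
            using gr[of T2 T1] T12 x0 by (intro mult_left_mono) auto
          finally show ?thesis .
        qed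
        show "real (card (?B T)) > 0 \<and> (\<forall>i\<in>Is - T. real (card (A i \<inter> ?B T)) \<le> x * real (card (?B T)))"
          using pos bound by blast
      qed
    qed
    moreover have "T \<subseteq> Is \<Longrightarrow> finite T" using finI finite_subset by blast
    ultimately show ?thesis by blast
  qed
  then have "real (card (?B Is)) > 0" by blast
  then show ?thesis by (metis card.empty of_nat_0 less_irrefl)
qed


lemma prod_component:
  fixes f :: "'b \<Rightarrow> ('a::comm_monoid_mult) ^ 'n"
  shows "(prod f S) $ i = prod (\<lambda>x. f x $ i) S"
proof (cases "finite S")
  case True
  then show ?thesis by induct simp_all
next
  case False
  then show ?thesis by simp
qed

lemma egz_mono: "egz_prop t R m l0 \<Longrightarrow> l0 \<le> l \<Longrightarrow> egz_prop t R m l"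
  unfolding egz_prop_def by auto

lemma egz_gt:
  assumes "\<not> egz_prop t (TYPE('r::comm_ring_1)) m l"
  shows "EGZ t TYPE('r) m > enat l"
proof (cases "\<exists>l'>0. egz_prop t TYPE('r) m l'")
  case True
  define L where "L = (LEAST l'. l' > 0 \<and> egz_prop t TYPE('r) m l')"
  have "L > 0 \<and> egz_prop t TYPE('r) m L"
    unfolding L_def using True by (rule LeastI_ex)
  then have "L > l" using assms egz_mono[of t "TYPE('r)" m L l] by (cases "L \<le> l") auto
  then show ?thesis unfolding EGZ_def using True by (subst if_P) (auto simp: L_def)
next
  case False
  then show ?thesis unfolding EGZ_def by (subst if_not_P) auto
qed

lemma small_l:
  assumes "l < t"
  shows "\<not> egz_prop t (TYPE('r::comm_ring_1)) m l"
proof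
  assume "egz_prop t (TYPE('r)) m l"
  moreover have "l \<le> length (replicate l (0::'r))" by simp
  ultimately have "\<exists>I\<subseteq>{..<length (replicate l (0::'r))}. card I = t \<and> esym m (replicate l (0::'r)) I = 0"
    unfolding egz_prop_def by blast
  then obtain I where I: "I \<subseteq> {..<length (replicate l (0::'r))}" "card I = t" by blast
  then have "card I \<le> l" using card_mono[of "{..<l}" I] by simp
  then show False using I assms by simp
qed

lemma ebound:
  assumes "a \<ge> (1::nat)"
  shows "exp (-1) \<le> (1 - 1 / real (a + 1)) ^ a"
proof -
  have a0: "real a > 0" using assms by simp
  have "(1 + 1 / real a) ^ a \<le> exp (1 / real a) ^ a"
    by (intro power_mono) (auto simp: add_nonneg_nonneg)
  also have "\<dots> = exp (real a * (1 / real a))" by (rule exp_of_nat_mult[symmetric])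
  also have "\<dots> = exp 1" using a0 by simp
  finally have h: "(1 + 1 / real a) ^ a \<le> exp 1" .
  have eq: "1 - 1 / real (a + 1) = 1 / (1 + 1 / real a)"
    using a0 by (simp add: field_simps)
  have "1 + 1 / real a > 0" using a0 by (simp add: add_pos_pos)
  then have pos: "(1 + 1 / real a) ^ a > 0" by (rule zero_less_power)
  have "exp (-1) = 1 / exp (1::real)" by (simp add: exp_minus inverse_eq_divide)
  also have "\<dots> \<le> 1 / (1 + 1 / real a) ^ a"
    using h pos by (intro divide_left_mono) auto
  also have "\<dots> = (1 - 1 / real (a + 1)) ^ a" unfolding eq by (simp add: power_divide)
  finally show ?thesis .
qed

lemma choose_x:
  fixes p :: real and D :: nat
  assumes D1: "D \<ge> 1" and p0: "p \<ge> 0" and h: "exp 1 * real D * p \<le> 1"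
  shows "\<exists>x. 0 \<le> x \<and> x < 1 \<and> p \<le> x * (1 - x) ^ (D - 1)"
proof (cases "D = 1")
  case True
  have "p < 1"
  proof (rule ccontr)
    assume "\<not> p < 1"
    then have "exp 1 * p \<ge> exp 1 * 1" by (intro mult_left_mono) auto
    moreover have "exp (1::real) > 1" by simp
    moreover have "exp 1 * p \<le> 1" using h True by simp
    ultimately show False by linarith
  qed
  then show ?thesis using True p0 by (intro exI[of _ p]) simp
next
  case False
  then have D2: "D \<ge> 2" using D1 by simp
  define a where "a = D - 1"
  have a1: "a \<ge> 1" and Da: "D = a + 1" using D2 unfolding a_def by auto
  have Dpos: "real D > 0" using D1 by simp
  have eD: "exp 1 * real D > 0" using Dpos by simp
  have "p * (exp 1 * real D) \<le> 1" using h by (simp only: mult_ac)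
  then have "p \<le> 1 / (exp 1 * real D)" using eD by (simp only: pos_le_divide_eq)
  also have "\<dots> = (1 / real D) * exp (-1)" by (simp add: exp_minus inverse_eq_divide)
  also have "\<dots> \<le> (1 / real D) * (1 - 1 / real D) ^ (D - 1)"
  proof -
    have "(1 - 1 / real D) ^ (D - 1) = (1 - 1 / real (a + 1)) ^ a" using Da by simp
    then show ?thesis using ebound[OF a1] Dpos by (intro mult_left_mono) auto
  qed
  finally have "p \<le> (1 / real D) * (1 - 1 / real D) ^ (D - 1)" .
  moreover have "1 / real D < 1" using D2 by simp
  ultimately show ?thesis by (intro exI[of _ "1 / real D"]) auto
qed


lemma exists_seq:
  fixes t m l :: nat
  assumes m1: "m \<ge> 1" and tm: "t \<ge> m" and lt: "l \<ge> t"
    and hyp: "exp 1 * (real (l choose t) - real (if l < 2 * t then 0 else (l - t) choose t))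
           * (real m / real CARD('a::{finite,field})) ^ CARD('n::finite) \<le> 1"
  shows "\<exists>S::('a^'n) list. length S = l \<and> (\<forall>I. I \<subseteq> {..<l} \<and> card I = t \<longrightarrow> esym m S I \<noteq> 0)"
proof -
  define Y where "Y = {..<l} \<times> (UNIV :: 'n set)"
  define \<Omega> where "\<Omega> = PiE Y (\<lambda>_. UNIV :: 'a set)"
  define Is where "Is = {I. I \<subseteq> {..<l} \<and> card I = t}"
  define A where "A = (\<lambda>I. {w\<in>\<Omega>. \<forall>k\<in>(UNIV::'n set). es m w I k = 0})"
  define N where "N = (\<lambda>I::nat set. {J. J \<inter> I \<noteq> {}})"
  define p where "p = (real m / real CARD('a)) ^ CARD('n)"
  define Dn where "Dn = (l choose t) - ((l - t) choose t)"
  have finY: "finite Y" unfolding Y_def by simp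
  have finO: "finite \<Omega>" unfolding \<Omega>_def using finY by (simp add: finite_PiE)
  have neO: "\<Omega> \<noteq> {}" unfolding \<Omega>_def by (simp add: PiE_eq_empty_iff)
  have posO: "card \<Omega> > 0" using finO neO by (simp add: card_gt_0_iff)
  have finI: "finite Is" unfolding Is_def by (rule finite_subset[of _ "Pow {..<l}"]) auto
  have t1: "t \<ge> 1" using m1 tm by simp
  have cardIs: "card Is = l choose t" unfolding Is_def using n_subsets[of "{..<l}" t] by simp
  have cardN: "card (N I \<inter> Is) = Dn" if I: "I \<in> Is" for I
  proof -
    define Dis where "Dis = {J. J \<subseteq> {..<l} - I \<and> card J = t}"
    have e1: "N I \<inter> Is = Is - Dis" unfolding N_def Is_def Dis_def by auto
    have e2: "Dis \<subseteq> Is" unfolding Dis_def Is_def by auto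
    have Isub: "I \<subseteq> {..<l}" "card I = t" using I unfolding Is_def by auto
    have "finite I" using Isub(1) finite_subset by blast
    then have "card ({..<l} - I) = card {..<l} - card I" using Isub(1) by (rule card_Diff_subset)
    then have "card ({..<l} - I) = l - t" using Isub(2) by simp
    then have e3: "card Dis = (l - t) choose t" unfolding Dis_def using n_subsets[of "{..<l} - I" t] by simp
    have "card (Is - Dis) = card Is - card Dis" using e2 finI by (intro card_Diff_subset) (auto intro: finite_subset)
    then show ?thesis unfolding e1 Dn_def cardIs e3 .
  qed
  define I0 where "I0 = {..<t}"
  have I0: "I0 \<in> Is" unfolding I0_def Is_def using lt by auto
  have Ni: "I \<in> N I" if "I \<in> Is" for I
  proof -
    have "I \<noteq> {}" using that t1 unfolding Is_def by auto
    then show ?thesis unfolding N_def by auto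
  qed
  have Dn1: "Dn \<ge> 1"
  proof -
    have "I0 \<in> N I0 \<inter> Is" using I0 Ni by auto
    moreover have "finite (N I0 \<inter> Is)" using finI by simp
    ultimately have "card (N I0 \<inter> Is) > 0" by (auto simp: card_gt_0_iff)
    then show ?thesis using cardN[OF I0] by simp
  qed
  have le: "(l - t) choose t \<le> l choose t" using Dn1 unfolding Dn_def by simp
  have ifeq: "(if l < 2 * t then 0 else (l - t) choose t) = (l - t) choose t"
  proof (cases "l < 2 * t")
    case True
    then have "l - t < t" by simp
    then show ?thesis using True by (simp add: binomial_eq_0)
  qed simp
  have DnR: "real Dn = real (l choose t) - real (if l < 2 * t then 0 else (l - t) choose t)"
    unfolding ifeq Dn_def using le by (simp add: of_nat_diff)
  have p0: "p \<ge> 0" unfolding p_def by simp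
  have h: "exp 1 * real Dn * p \<le> 1" using hyp unfolding DnR p_def .
  obtain x where x: "0 \<le> x" "x < 1" "p \<le> x * (1 - x) ^ (Dn - 1)" using choose_x[OF Dn1 p0 h] by blast
  have cardA: "real (card (A I)) \<le> p * real (card \<Omega>)" if I: "I \<in> Is" for I
  proof -
    have a1: "I \<times> UNIV \<subseteq> Y" using I unfolding Is_def Y_def by auto
    have a2: "finite I" using I unfolding Is_def by (auto intro: finite_subset)
    have a3: "m \<le> card I" using I tm unfolding Is_def by simp
    show ?thesis unfolding A_def p_def using coord[OF \<Omega>_def finY a2 a1 a3, of UNIV] by simp
  qed
  have ind: "real (card (A I \<inter> (\<Omega> - \<Union>(A ` T)))) \<le> p * real (card (\<Omega> - \<Union>(A ` T)))"
    if I: "I \<in> Is" and T: "T \<subseteq> Is" and TN: "T \<inter> N I = {}" for I T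
  proof -
    have disj: "J \<inter> I = {}" if "J \<in> T" for J using that TN unfolding N_def by auto
    have Y1: "I \<times> UNIV \<subseteq> Y" using I unfolding Is_def Y_def by auto
    have dA: "dep \<Omega> (A I) (I \<times> UNIV)"
      unfolding dep_def
    proof (intro ballI impI)
      fix f g assume fg: "f \<in> \<Omega>" "g \<in> \<Omega>" "\<forall>z\<in>I \<times> UNIV. f z = g z"
      have "es m f I k = es m g I k" for k using fg(3) by (intro es_cong) auto
      then show "(f \<in> A I) = (g \<in> A I)" unfolding A_def using fg by auto
    qed
    have dB: "dep \<Omega> (\<Omega> - \<Union>(A ` T)) (Y - I \<times> UNIV)"
      unfolding dep_def
    proof (intro ballI impI)
      fix f g assume fg: "f \<in> \<Omega>" "g \<in> \<Omega>" "\<forall>z\<in>Y - I \<times> UNIV. f z = g z"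
      have "es m f J k = es m g J k" if J: "J \<in> T" for J k
      proof (rule es_cong)
        fix j assume "j \<in> J"
        then have "(j, k) \<in> Y - I \<times> UNIV" using J T disj[OF J] unfolding Is_def Y_def by auto
        then show "f (j, k) = g (j, k)" using fg(3) by blast
      qed
      then have "f \<in> A J \<longleftrightarrow> g \<in> A J" if "J \<in> T" for J unfolding A_def using fg that by auto
      then show "(f \<in> \<Omega> - \<Union>(A ` T)) = (g \<in> \<Omega> - \<Union>(A ` T))" using fg by auto
    qed
    have key: "card (A I \<inter> (\<Omega> - \<Union>(A ` T))) * card \<Omega> = card (A I) * card (\<Omega> - \<Union>(A ` T))"
      by (rule card_indep[OF \<Omega>_def Y1 _ _ dA dB]) (auto simp: A_def)
    have "real (card (A I \<inter> (\<Omega> - \<Union>(A ` T)))) * real (card \<Omega>) = real (card (A I)) * real (card (\<Omega> - \<Union>(A ` T)))"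
      using arg_cong[OF key, of "of_nat :: nat \<Rightarrow> real"] by (simp only: of_nat_mult)
    also have "\<dots> \<le> (p * real (card \<Omega>)) * real (card (\<Omega> - \<Union>(A ` T)))"
      using cardA[OF I] by (intro mult_right_mono) auto
    also have "\<dots> = (p * real (card (\<Omega> - \<Union>(A ` T)))) * real (card \<Omega>)" by (simp only: ac_simps)
    finally have c: "real (card (A I \<inter> (\<Omega> - \<Union>(A ` T)))) * real (card \<Omega>) \<le> (p * real (card (\<Omega> - \<Union>(A ` T)))) * real (card \<Omega>)" .
    have "real (card \<Omega>) > 0" using posO by simp
    from mult_right_le_imp_le[OF c this] show ?thesis .
  qed
  have ND: "card (N I \<inter> Is) \<le> Dn" if "I \<in> Is" for I using cardN[OF that] by simp
  have "\<Omega> - \<Union>(A ` Is) \<noteq> {}"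
    by (rule LLL[OF finO finI neO x(1) x(2) x(3) Ni ND ind])
  then obtain w where w: "w \<in> \<Omega>" "\<forall>I\<in>Is. w \<notin> A I" by blast
  define S where "S = map (\<lambda>i. \<chi> k. w (i, k)) [0..<l]"
  have lenS: "length S = l" unfolding S_def by simp
  have comp: "esym m S I $ k = es m w I k" if IL: "I \<subseteq> {..<l}" for I k
    unfolding esym_def es_def sum_component prod_component
  proof (intro sum.cong refl prod.cong)
    fix J j assume "J \<in> {J. J \<subseteq> I \<and> card J = m}" "j \<in> J"
    then have "j < l" using IL by auto
    then show "S ! j $ k = w (j, k)" unfolding S_def by simp
  qed
  show ?thesis
  proof (intro exI conjI allI impI)
    show "length S = l" by (rule lenS)
    fix I assume I: "I \<subseteq> {..<l} \<and> card I = t"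
    then have "I \<in> Is" unfolding Is_def by simp
    then obtain k where "es m w I k \<noteq> 0" using w unfolding A_def by auto
    then have "esym m S I $ k \<noteq> 0" using comp I by simp
    then show "esym m S I \<noteq> 0" by auto
  qed
qed

theorem theorem2p4:
  fixes t m l :: nat
  assumes "m \<ge> 1" and "t \<ge> m" and "l \<ge> 1"
    and "exp 1 * (real (l choose t) - real (if l < 2 * t then 0 else (l - t) choose t))
           * (real m / real CARD('a::{finite,field})) ^ CARD('n::finite) \<le> 1"
  shows "EGZ t TYPE('a ^ 'n) m > enat l"
proof (cases "l < t")
  case True
  then show ?thesis by (intro egz_gt small_l)
next
  case False
  then obtain S :: "('a ^ 'n) list" where S: "length S = l" "\<forall>I. I \<subseteq> {..<l} \<and> card I = t \<longrightarrow> esym m S I \<noteq> 0"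
    using exists_seq[OF assms(1,2) _ assms(4)] by (metis not_less)
  have "\<not> egz_prop t TYPE('a ^ 'n) m l"
    unfolding egz_prop_def using S by auto
  then show ?thesis by (rule egz_gt)
qed

end
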